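(* Let $n\geq3$, let $o_1,o_2$ be two non-parallel $\mathcal{O}_n$-directions, write $o_1=\alpha+\beta\zeta_n$, $o_2=\gamma+\delta\zeta_n$ with $\alpha,\beta,\gamma,\delta\in\mathbb{Z}[\zeta_n+\bar\zeta_n]$, and let $M_{\{o_1,o_2\}}=\operatorname{lin}_{\mathbb{Z}[\zeta_n+\bar\zeta_n]}\left(\left\{\frac{o_1}{\alpha\delta-\beta\gamma},\frac{o_2}{\alpha\delta-\beta\gamma}\right\}\right)$. Then $\mathcal{O}_n$ is a subgroup of $M_{\{o_1,o_2\}}$ and the subgroup index $[M_{\{o_1,o_2\}}:\mathcal{O}_n]$ is finite. Hence there are $c\in\mathbb{N}$ and $t_1,\dots,t_c\in M_{\{o_1,o_2\}}$, where one may take $t_1=0$, such that $M_{\{o_1,o_2\}}=\dot{\bigcup}_{i=1}^c(t_i+\mathcal{O}_n)$ (disjoint union), and consequently every subset $G\subset M_{\{o_1,o_2\}}$ satisfies $G=\dot{\bigcup}_{i=1}^c\bigl(G\cap(t_i+\mathcal{O}_n)\bigr)$.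
   Context: $\zeta_n$ is a primitive $n$th root of unity in $\mathbb{C}$, $\bar\zeta_n$ its complex conjugate, $\mathcal{O}_n=\mathbb{Z}[\zeta_n]$. An $\mathcal{O}_n$-direction is an element of $\mathcal{O}_n\setminus\{0\}$. The coefficients $\alpha,\beta,\gamma,\delta$ are uniquely determined, and $\alpha\delta-\beta\gamma\ne0$. $\operatorname{lin}_R(S)$ is the set of $R$-linear combinations of elements of $S$. *)

theory Defs
  imports Complex_Main
begin

definition prim_root :: "nat \<Rightarrow> complex \<Rightarrow> bool" where
  "prim_root n z \<longleftrightarrow> z ^ n = 1 \<and> (\<forall>k. 0 < k \<and> k < n \<longrightarrow> z ^ k \<noteq> 1)"

definition int_adjoin :: "complex \<Rightarrow> complex set" where
  "int_adjoin x = {(\<Sum>k\<le>m. of_int (a k) * x ^ k) | (a :: nat \<Rightarrow> int) m. True}"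

definition lin :: "complex set \<Rightarrow> complex set \<Rightarrow> complex set" where
  "lin R S = {(\<Sum>s\<in>F. c s * s) | F c. finite F \<and> F \<subseteq> S \<and> (\<forall>s\<in>F. c s \<in> R)}"

definition parallel :: "complex \<Rightarrow> complex \<Rightarrow> bool" where
  "parallel u v \<longleftrightarrow> (\<exists>r::real. u = of_real r * v \<or> v = of_real r * u)"

end

theory Submission
  imports Defs "HOL-Computational_Algebra.Polynomial" "HOL-Library.FuncSet"
begin

definition subr :: "complex set \<Rightarrow> bool" where
  "subr S \<longleftrightarrow> 1 \<in> S \<and> (\<forall>a\<in>S. \<forall>b\<in>S. a + b \<in> S \<and> a * b \<in> S \<and> - a \<in> S)"

lemma subr_1: "subr S \<Longrightarrow> 1 \<in> S" by (simp add: subr_def)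
lemma subr_add: "subr S \<Longrightarrow> a \<in> S \<Longrightarrow> b \<in> S \<Longrightarrow> a + b \<in> S" by (simp add: subr_def)
lemma subr_mult: "subr S \<Longrightarrow> a \<in> S \<Longrightarrow> b \<in> S \<Longrightarrow> a * b \<in> S" by (simp add: subr_def)
lemma subr_uminus: "subr S \<Longrightarrow> a \<in> S \<Longrightarrow> - a \<in> S" by (simp add: subr_def)
lemma subr_0: "subr S \<Longrightarrow> 0 \<in> S"
  using subr_add[of S 1 "-1"] subr_1 subr_uminus by fastforce
lemma subr_diff: "subr S \<Longrightarrow> a \<in> S \<Longrightarrow> b \<in> S \<Longrightarrow> a - b \<in> S"
  using subr_add[of S a "-b"] subr_uminus by fastforce
lemma subr_of_nat: "subr S \<Longrightarrow> of_nat k \<in> S"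
  by (induction k) (auto intro: subr_0 subr_add subr_1)
lemma subr_of_int: "subr S \<Longrightarrow> of_int k \<in> S"
proof (cases "k \<ge> 0")
  case True
  assume "subr S"
  then have "of_nat (nat k) \<in> S" by (rule subr_of_nat)
  with True show ?thesis by simp
next
  case False
  assume "subr S"
  then have "- of_nat (nat (-k)) \<in> S" by (intro subr_uminus subr_of_nat)
  with False show ?thesis by simp
qed
lemma subr_pow: "subr S \<Longrightarrow> x \<in> S \<Longrightarrow> x ^ k \<in> S"
  by (induction k) (auto intro: subr_1 subr_mult)
lemma subr_sum: "subr S \<Longrightarrow> (\<And>i. i \<in> A \<Longrightarrow> f i \<in> S) \<Longrightarrow> sum f A \<in> S"
  by (induction A rule: infinite_finite_induct) (auto intro: subr_0 subr_add)

lemma int_adjoin_subset: assumes "subr S" "x \<in> S" shows "int_adjoin x \<subseteq> S"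
  unfolding int_adjoin_def using assms
  by (auto intro!: subr_sum subr_mult subr_of_int subr_pow)

lemma int_adjoin_poly: "int_adjoin x = {poly p x | p. \<forall>i. coeff p i \<in> \<int>}"
proof safe
  fix y assume "y \<in> int_adjoin x"
  then obtain a m where y: "y = (\<Sum>k\<le>m. of_int (a k) * x ^ k)" unfolding int_adjoin_def by auto
  define p where "p = (\<Sum>k\<le>m. monom (of_int (a k) :: complex) k)"
  have "poly p x = y" unfolding p_def y by (simp add: poly_sum poly_monom)
  moreover have "\<forall>i. coeff p i \<in> \<int>" unfolding p_def
    by (auto simp: coeff_sum coeff_monom intro!: Ints_sum)
  ultimately show "\<exists>p. y = poly p x \<and> (\<forall>i. coeff p i \<in> \<int>)" by auto
next
  fix p :: "complex poly" assume h: "\<forall>i. coeff p i \<in> \<int>"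
  define a where "a = (\<lambda>k. SOME j. coeff p k = of_int j)"
  have a: "of_int (a k) = coeff p k" for k
  proof -
    from h obtain j where "coeff p k = of_int j" by (meson Ints_cases)
    then show ?thesis unfolding a_def by (metis (mono_tags, lifting) someI_ex)
  qed
  have "poly p x = (\<Sum>k\<le>degree p. of_int (a k) * x ^ k)" by (simp add: poly_altdef a)
  then show "poly p x \<in> int_adjoin x" unfolding int_adjoin_def by blast
qed

lemma subr_int_adjoin: "subr (int_adjoin x)"
  unfolding subr_def int_adjoin_poly
proof (intro conjI ballI)
  show "1 \<in> {poly p x |p. \<forall>i. coeff p i \<in> \<int>}"
    by (rule CollectI, rule exI[of _ 1]) (auto simp: coeff_1)
next
  fix a b assume "a \<in> {poly p x |p. \<forall>i. coeff p i \<in> \<int>}" "b \<in> {poly p x |p. \<forall>i. coeff p i \<in> \<int>}"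
  then obtain p q where a: "a = poly p x" "\<forall>i. coeff p i \<in> \<int>" and b: "b = poly q x" "\<forall>i. coeff q i \<in> \<int>"
    by auto
  show "a + b \<in> {poly p x |p. \<forall>i. coeff p i \<in> \<int>}"
    by (rule CollectI, rule exI[of _ "p + q"]) (use a b in auto)
  show "- a \<in> {poly p x |p. \<forall>i. coeff p i \<in> \<int>}"
    by (rule CollectI, rule exI[of _ "- p"]) (use a in auto)
  show "a * b \<in> {poly p x |p. \<forall>i. coeff p i \<in> \<int>}"
    by (rule CollectI, rule exI[of _ "p * q"]) (use a b in \<open>auto simp: coeff_mult intro!: Ints_sum Ints_mult\<close>)
qed

lemma in_int_adjoin: "x \<in> int_adjoin x"
proof -
  have "x = (\<Sum>k\<le>1. of_int (if k = 1 then 1 else 0) * x ^ k)" by simp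
  then show ?thesis unfolding int_adjoin_def mem_Collect_eq
    by (intro exI[of _ "\<lambda>k::nat. if k = 1 then 1 else (0::int)"] exI[of _ "1::nat"]) simp
qed

lemma z_facts:
  assumes "n \<ge> 3" "prim_root n z"
  shows "z \<noteq> 0" "cnj z = z^(n-1)" "z^2 = (z + cnj z)*z - 1" "z + cnj z \<in> \<real>" "z * cnj z = 1"
proof -
  have zn: "z ^ n = 1" using assms(2) by (simp add: prim_root_def)
  have n0: "n \<noteq> 0" using assms(1) by simp
  show z0: "z \<noteq> 0" using zn n0 by (auto simp: power_0_left)
  have nz: "norm z = 1" using zn n0 power_eq_1_iff by blast
  show zc: "z * cnj z = 1" using nz complex_norm_square[of z] by simp
  have "z * z^(n-1) = z^n" using n0 by (simp add: power_Suc[symmetric])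
  then have "z * z^(n-1) = z * cnj z" using zn zc by simp
  then show "cnj z = z^(n-1)" using z0 by simp
  show "z^2 = (z + cnj z)*z - 1" using zc by (simp add: algebra_simps power2_eq_square)
  show "z + cnj z \<in> \<real>" by (simp add: complex_add_cnj)
qed

lemma subr_Reals: "subr (\<real> :: complex set)"
  unfolding subr_def by auto

lemma R_real: "int_adjoin (z + cnj z) \<subseteq> \<real>"
  by (rule int_adjoin_subset[OF subr_Reals]) (simp add: complex_add_cnj)

lemma R_sub_O:
  assumes "n \<ge> 3" "prim_root n z"
  shows "int_adjoin (z + cnj z) \<subseteq> int_adjoin z"
proof (rule int_adjoin_subset[OF subr_int_adjoin])
  have "cnj z \<in> int_adjoin z" unfolding z_facts(2)[OF assms]
    by (rule subr_pow[OF subr_int_adjoin in_int_adjoin])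
  then show "z + cnj z \<in> int_adjoin z" by (rule subr_add[OF subr_int_adjoin in_int_adjoin])
qed

lemma O_decomp:
  assumes "n \<ge> 3" "prim_root n z"
  shows "int_adjoin z = {a + b*z | a b. a \<in> int_adjoin (z + cnj z) \<and> b \<in> int_adjoin (z + cnj z)}"
    (is "?O = ?S")
proof
  let ?R = "int_adjoin (z + cnj z)"
  have R: "subr ?R" by (rule subr_int_adjoin)
  have w: "z + cnj z \<in> ?R" by (rule in_int_adjoin)
  have z2: "z^2 = (z + cnj z)*z - 1" by (rule z_facts(3)[OF assms])
  show "?O \<subseteq> ?S"
  proof (rule int_adjoin_subset)
    have "z = 0 + 1 * z" by simp
    then show "z \<in> ?S" using subr_0[OF R] subr_1[OF R] by blast
    show "subr ?S" unfolding subr_def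
    proof (intro conjI ballI)
      have "1 = 1 + 0 * z" by simp
      then show "1 \<in> ?S" using subr_0[OF R] subr_1[OF R] by blast
      fix x y assume "x \<in> ?S" "y \<in> ?S"
      then obtain a b c d where x: "x = a + b*z" "a \<in> ?R" "b \<in> ?R"
        and y: "y = c + d*z" "c \<in> ?R" "d \<in> ?R" by blast
      have "x + y = (a + c) + (b + d) * z" using x y by (simp add: algebra_simps)
      then show "x + y \<in> ?S" using x y subr_add[OF R] by blast
      have "- x = (- a) + (- b) * z" using x by simp
      then show "- x \<in> ?S" using x subr_uminus[OF R] by blast
      have "x * y = (a*c + b*d*z^2) + (a*d + b*c) * z" using x y by (simp add: algebra_simps power2_eq_square)
      also have "\<dots> = (a*c - b*d) + (a*d + b*c + b*d*(z + cnj z)) * z" unfolding z2 by (simp add: algebra_simps)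
      finally have e: "x * y = (a*c - b*d) + (a*d + b*c + b*d*(z + cnj z)) * z" .
      have "a*c - b*d \<in> ?R" using x y by (intro subr_diff[OF R] subr_mult[OF R])
      moreover have "a*d + b*c + b*d*(z + cnj z) \<in> ?R" using x y w
        by (meson subr_add[OF R] subr_mult[OF R])
      ultimately show "x * y \<in> ?S" using e by blast
    qed
  qed
  show "?S \<subseteq> ?O"
  proof safe
    fix a b assume "a \<in> ?R" "b \<in> ?R"
    then have "a \<in> ?O" "b \<in> ?O" using R_sub_O[OF assms] by auto
    then show "a + b * z \<in> ?O"
      by (intro subr_add[OF subr_int_adjoin] subr_mult[OF subr_int_adjoin] in_int_adjoin)
  qed
qed

lemma lin2:
  assumes "0 \<in> R" "e1 \<noteq> e2"
  shows "lin R {e1, e2} = {a*e1 + b*e2 | a b. a \<in> R \<and> b \<in> R}"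
proof
  show "lin R {e1, e2} \<subseteq> {a*e1 + b*e2 | a b. a \<in> R \<and> b \<in> R}"
  proof
    fix x assume "x \<in> lin R {e1, e2}"
    then obtain F c where x: "x = (\<Sum>s\<in>F. c s * s)" "F \<subseteq> {e1, e2}" "\<forall>s\<in>F. c s \<in> R"
      unfolding lin_def by blast
    have "F = {} \<or> F = {e1} \<or> F = {e2} \<or> F = {e1, e2}" using x(2) by blast
    then show "x \<in> {a*e1 + b*e2 | a b. a \<in> R \<and> b \<in> R}"
    proof (elim disjE)
      assume F: "F = {}"
      have "x = 0 * e1 + 0 * e2" using x F by simp
      then show ?thesis using assms(1) by blast
    next
      assume F: "F = {e1}"
      have "x = c e1 * e1 + 0 * e2" using x F by simp
      then show ?thesis using x F assms(1) by blast
    next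
      assume F: "F = {e2}"
      have "x = 0 * e1 + c e2 * e2" using x F by simp
      then show ?thesis using x F assms(1) by blast
    next
      assume F: "F = {e1, e2}"
      have "x = c e1 * e1 + c e2 * e2" using x F assms(2) by simp
      then show ?thesis using x F by blast
    qed
  qed
  show "{a*e1 + b*e2 | a b. a \<in> R \<and> b \<in> R} \<subseteq> lin R {e1, e2}"
  proof safe
    fix a b assume ab: "a \<in> R" "b \<in> R"
    have "a*e1 + b*e2 = (\<Sum>s\<in>{e1, e2}. (if s = e1 then a else b) * s)" using assms(2) by simp
    then show "a*e1 + b*e2 \<in> lin R {e1, e2}" unfolding lin_def using ab
      by (intro CollectI exI[of _ "{e1, e2}"] exI[of _ "\<lambda>s. if s = e1 then a else b"]) auto
  qed
qed

lemma D_nonzero: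
  fixes \<alpha> \<beta> \<gamma> \<delta> z o1 o2 :: complex
  assumes "\<alpha> \<in> \<real>" "\<beta> \<in> \<real>" "\<gamma> \<in> \<real>" "\<delta> \<in> \<real>" "o1 = \<alpha> + \<beta>*z" "o2 = \<gamma> + \<delta>*z"
    "o1 \<noteq> 0" "\<not> parallel o1 o2"
  shows "\<alpha>*\<delta> - \<beta>*\<gamma> \<noteq> 0"
proof
  assume D: "\<alpha>*\<delta> - \<beta>*\<gamma> = 0"
  show False
  proof (cases "\<alpha> = 0")
    case False
    have "\<gamma> / \<alpha> \<in> \<real>" using assms by auto
    then obtain r where r: "of_real r = \<gamma> / \<alpha>" by (metis Reals_cases)
    have "o2 = of_real r * o1" unfolding r assms(5,6) using False D
      by (simp add: field_simps)
    then show False using assms(8) unfolding parallel_def by blast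
  next
    case True
    then have b: "\<beta> \<noteq> 0" using assms(5,7) by auto
    then have g: "\<gamma> = 0" using D True by simp
    have "\<delta> / \<beta> \<in> \<real>" using assms by auto
    then obtain r where r: "of_real r = \<delta> / \<beta>" by (metis Reals_cases)
    have "o2 = of_real r * o1" unfolding r assms(5,6) using True g b by (simp add: field_simps)
    then show False using assms(8) unfolding parallel_def by blast
  qed
qed

interpretation Qvs: vector_space "\<lambda>(q::rat) (x::complex). of_rat q * x"
  by unfold_locales (auto simp: algebra_simps of_rat_add of_rat_mult)

lemma lowest_coeff:
  assumes S: "subr S" and "D \<in> S" "D \<noteq> 0" "(\<Sum>i\<le>k. of_int (a i) * D^i) = 0" "a m \<noteq> 0" "m \<le> k"
    "\<forall>i<m. a i = 0"
  shows "of_int (a m) / D \<in> S"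
proof -
  let ?s = "\<Sum>i\<in>{Suc m..k}. of_int (a i) * D^(i - Suc m)"
  have s: "?s \<in> S" using assms(2) by (intro subr_sum[OF S] subr_mult[OF S] subr_of_int[OF S] subr_pow[OF S])
  have "(\<Sum>i\<le>k. of_int (a i) * D^i) = (\<Sum>i\<in>{m..k}. of_int (a i) * D^i)"
    by (rule sum.mono_neutral_right) (use assms(7) in auto)
  also have "\<dots> = of_int (a m) * D^m + (\<Sum>i\<in>{Suc m..k}. of_int (a i) * D^i)"
    using assms(6) by (simp add: sum.atLeast_Suc_atMost)
  also have "(\<Sum>i\<in>{Suc m..k}. of_int (a i) * D^i) = D^Suc m * ?s"
    unfolding sum_distrib_left
  proof (rule sum.cong)
    fix i assume "i \<in> {Suc m..k}"
    then have "i = Suc m + (i - Suc m)" by auto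
    then have "D^i = D^Suc m * D^(i - Suc m)" by (metis power_add)
    then show "of_int (a i) * D^i = D^Suc m * (of_int (a i) * D^(i - Suc m))" by simp
  qed simp
  finally have "D^m * (of_int (a m) + D * ?s) = 0" using assms(4) by (simp add: algebra_simps)
  then have "of_int (a m) + D * ?s = 0" using assms(3) by simp
  then have "of_int (a m) / D = - ?s" using assms(3) by (simp add: field_simps add_eq_0_iff)
  then show ?thesis using s subr_uminus[OF S] by simp
qed

lemma clear_denom:
  fixes c :: "nat \<Rightarrow> rat"
  shows "\<exists>B::int. B > 0 \<and> (\<forall>i\<le>k. \<exists>j::int. of_int B * c i = of_int j)"
proof -
  define B where "B = (\<Prod>i\<le>k. snd (quotient_of (c i)))"
  have "B > 0" unfolding B_def by (intro prod_pos) (metis quotient_of_denom_pos prod.collapse)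
  moreover have "\<exists>j::int. of_int B * c i = of_int j" if "i \<le> k" for i
  proof -
    obtain p q where pq: "quotient_of (c i) = (p, q)" by (cases "quotient_of (c i)")
    have q: "q > 0" using pq by (rule quotient_of_denom_pos)
    have ci: "c i = of_int p / of_int q" using pq by (rule quotient_of_div)
    have "q dvd B" unfolding B_def using that pq
      by (metis atMost_iff dvd_prodI finite_atMost snd_conv)
    then obtain r where r: "B = q * r" by (auto simp: dvd_def)
    have "of_int B * c i = of_int (r * p)" unfolding ci r using q by (simp add: field_simps)
    then show ?thesis by blast
  qed
  ultimately show ?thesis by blast
qed

lemma denom_exists:
  assumes S: "subr S" and "D \<in> S" "D \<noteq> 0" "finite T" "S \<subseteq> Qvs.span T"
  shows "\<exists>N::int. N > 0 \<and> of_int N / D \<in> S"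
proof -
  define k where "k = card T"
  show ?thesis
  proof (cases "inj_on (\<lambda>i. D^i) {..k}")
    case False
    then obtain i j where ij: "i \<noteq> j" "D^i = D^j" by (auto simp: inj_on_def)
    have "\<exists>i j. i < j \<and> D^i = D^j"
    proof (cases "i < j")
      case True then show ?thesis using ij by blast
    next
      case False then have "j < i" using ij by auto
      then show ?thesis using ij by metis
    qed
    then obtain i j where ij: "i < j" "D^i = D^j" by blast
    have "D^j = D^i * D^(j - i)" using ij(1) by (metis le_add_diff_inverse less_imp_le power_add)
    then have "D^i * (D^(j - i) - 1) = 0" using ij(2) by (simp add: algebra_simps)
    then have d1: "D^(j - i) = 1" using assms(3) by simp
    have "D * D^(j - i - 1) = D^(j - i)" using ij(1) by (metis Suc_diff_Suc diff_Suc_1 diff_diff_left power_Suc zero_less_diff)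
    then have "of_int 1 / D = D^(j - i - 1)" using d1 assms(3) by (simp add: field_simps)
    then show ?thesis using subr_pow[OF S assms(2)] by (intro exI[of _ 1]) simp
  next
    case True
    let ?P = "(\<lambda>i. D^i) ` {..k}"
    have cardP: "card ?P = Suc k" using True by (simp add: card_image)
    have PT: "?P \<subseteq> Qvs.span T" using assms(5) subr_pow[OF S assms(2)] by auto
    have "Qvs.dependent ?P"
    proof (rule ccontr)
      assume "\<not> Qvs.dependent ?P"
      then have "card ?P \<le> card T" using Qvs.independent_span_bound[OF assms(4) _ PT] by blast
      with cardP show False unfolding k_def by simp
    qed
    then obtain u where u: "\<exists>v\<in>?P. u v \<noteq> 0" "(\<Sum>v\<in>?P. of_rat (u v) * v) = 0"
      using Qvs.dependent_finite[of ?P] by auto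
    define c where "c i = u (D^i)" for i
    have csum: "(\<Sum>i\<le>k. of_rat (c i) * D^i) = 0" using u(2) True by (simp add: sum.reindex c_def)
    obtain B where B: "B > 0" "\<forall>i\<le>k. \<exists>j::int. of_int B * c i = of_int j" using clear_denom by blast
    define a where "a i = (SOME j::int. of_int B * c i = of_int j)" for i
    have a: "of_int (a i) = of_int B * c i" if "i \<le> k" for i
      unfolding a_def using B(2) that by (metis (mono_tags, lifting) someI_ex)
    have "(\<Sum>i\<le>k. of_int (a i) * D^i) = of_int B * (\<Sum>i\<le>k. of_rat (c i) * D^i)"
      unfolding sum_distrib_left
    proof (rule sum.cong)
      fix i assume "i \<in> {..k}"
      then have "(of_int (a i) :: complex) = of_rat (of_int (a i))" by simp
      also have "\<dots> = of_rat (of_int B * c i)" using a \<open>i \<in> {..k}\<close> by simp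
      also have "\<dots> = of_int B * of_rat (c i)" by (simp add: of_rat_mult)
      finally show "of_int (a i) * D^i = of_int B * (of_rat (c i) * D^i)" by simp
    qed simp
    then have asum: "(\<Sum>i\<le>k. of_int (a i) * D^i) = 0" using csum by simp
    have ex: "\<exists>i. a i \<noteq> 0 \<and> i \<le> k"
    proof -
      from u(1) obtain i where i: "i \<le> k" "u (D^i) \<noteq> 0" by auto
      then have "c i \<noteq> 0" unfolding c_def by simp
      then have "(of_int (a i) :: rat) \<noteq> 0" using a[OF i(1)] B(1) by simp
      then show ?thesis using i by auto
    qed
    define m where "m = (LEAST i. a i \<noteq> 0)"
    have am: "a m \<noteq> 0" unfolding m_def using ex by (metis (mono_tags, lifting) LeastI)
    have mk: "m \<le> k" unfolding m_def using ex by (meson Least_le order_trans)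
    have below: "\<forall>i<m. a i = 0" unfolding m_def using not_less_Least by blast
    have q: "of_int (a m) / D \<in> S" by (rule lowest_coeff[OF S assms(2,3) asum am mk below])
    show ?thesis
    proof (cases "a m > 0")
      case True then show ?thesis using q by blast
    next
      case False
      then have "- a m > 0" using am by simp
      moreover have "of_int (- a m) / D \<in> S" using subr_uminus[OF S q] by simp
      ultimately show ?thesis by blast
    qed
  qed
qed

definition Zs :: "nat \<Rightarrow> complex \<Rightarrow> complex set" where
  "Zs n z = {(\<Sum>j<n. of_int (c j) * z^j) | c :: nat \<Rightarrow> int. True}"

lemma Zs_I: "x = (\<Sum>j<n. of_int (c j) * z^j) \<Longrightarrow> x \<in> Zs n z"
  unfolding Zs_def by blast

lemma Zs_add: "x \<in> Zs n z \<Longrightarrow> y \<in> Zs n z \<Longrightarrow> x + y \<in> Zs n z"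
proof -
  assume "x \<in> Zs n z" "y \<in> Zs n z"
  then obtain c d where "x = (\<Sum>j<n. of_int (c j) * z^j)" "y = (\<Sum>j<n. of_int (d j) * z^j)"
    unfolding Zs_def by blast
  then have "x + y = (\<Sum>j<n. of_int (c j + d j) * z^j)" by (simp add: sum.distrib algebra_simps)
  then show ?thesis by (rule Zs_I)
qed

lemma Zs_0: "0 \<in> Zs n z"
proof -
  have "(0::complex) = (\<Sum>j<n. of_int ((\<lambda>_. 0) j) * z^j)" by simp
  then show ?thesis by (rule Zs_I)
qed

lemma Zs_smult: "x \<in> Zs n z \<Longrightarrow> of_int k * x \<in> Zs n z"
proof -
  assume "x \<in> Zs n z"
  then obtain c where "x = (\<Sum>j<n. of_int (c j) * z^j)" unfolding Zs_def by blast
  then have "of_int k * x = (\<Sum>j<n. of_int (k * c j) * z^j)" by (simp add: sum_distrib_left algebra_simps)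
  then show ?thesis by (rule Zs_I)
qed

lemma Zs_sum: "(\<And>i. i \<in> A \<Longrightarrow> f i \<in> Zs n z) \<Longrightarrow> sum f A \<in> Zs n z"
  by (induction A rule: infinite_finite_induct) (auto intro: Zs_0 Zs_add)

lemma Zs_pow: assumes "z ^ n = 1" "n > 0" shows "z ^ k \<in> Zs n z"
proof -
  have "z ^ k = z ^ (n * (k div n) + k mod n)" by simp
  also have "\<dots> = z ^ (k mod n)"
  proof -
    have "z ^ (n * (k div n)) = 1" by (simp add: power_mult assms(1))
    then show ?thesis by (simp only: power_add) simp
  qed
  also have "\<dots> = (\<Sum>j<n. if j = k mod n then z^j else 0)"
    using assms(2) by (simp add: sum.delta)
  also have "\<dots> = (\<Sum>j<n. of_int (if j = k mod n then 1 else 0) * z^j)"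
    by (rule sum.cong) auto
  finally show ?thesis by (rule Zs_I)
qed

lemma O_Zs: assumes "z ^ n = 1" "n > 0" shows "int_adjoin z \<subseteq> Zs n z"
  unfolding int_adjoin_def
  by (auto intro!: Zs_sum Zs_smult Zs_pow assms)

lemma Zs_span: "Zs n z \<subseteq> Qvs.span ((\<lambda>j. z^j) ` {..<n})"
proof
  fix y assume "y \<in> Zs n z"
  then obtain c where y: "y = (\<Sum>j<n. of_int (c j) * z^j)" unfolding Zs_def by blast
  have "y = (\<Sum>j<n. of_rat (of_int (c j)) * z^j)" unfolding y by simp
  also have "\<dots> \<in> Qvs.span ((\<lambda>j. z^j) ` {..<n})"
    by (intro Qvs.span_sum Qvs.span_scale Qvs.span_base) auto
  finally show "y \<in> Qvs.span ((\<lambda>j. z^j) ` {..<n})" .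
qed

lemma coset_eq:
  assumes "subr Ov" "t - t' \<in> Ov"
  shows "(\<lambda>x. t + x) ` Ov = (\<lambda>x. t' + x) ` Ov"
proof safe
  fix x assume "x \<in> Ov"
  then have "(t - t') + x \<in> Ov" by (rule subr_add[OF assms(1) assms(2)])
  moreover have "t + x = t' + ((t - t') + x)" by simp
  ultimately show "t + x \<in> (\<lambda>x. t' + x) ` Ov" by blast
next
  fix x assume "x \<in> Ov"
  then have "x - (t - t') \<in> Ov" by (rule subr_diff[OF assms(1) _ assms(2)])
  moreover have "t' + x = t + (x - (t - t'))" by simp
  ultimately show "t' + x \<in> (\<lambda>x. t + x) ` Ov" by blast
qed

lemma cosets_finite:
  assumes Ov: "subr Ov" and OZ: "Ov \<subseteq> Zs n z" and zO: "z \<in> Ov"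
    and M: "M \<subseteq> {a*e1 + b*e2 | a b. a \<in> Ov \<and> b \<in> Ov}"
    and N: "N > 0" "of_int N * e1 \<in> Ov" "of_int N * e2 \<in> Ov"
  shows "finite {(\<lambda>x. t + x) ` Ov | t. t \<in> M}"
proof -
  define val where "val = (\<lambda>(c::nat\<Rightarrow>int, d::nat\<Rightarrow>int). (\<Sum>j<n. of_int (c j) * z^j * e1 + of_int (d j) * z^j * e2))"
  define A where "A = PiE {..<n} (\<lambda>_. {0..<N})"
  have fA: "finite A" unfolding A_def by (intro finite_PiE) auto
  have "{(\<lambda>x. t + x) ` Ov | t. t \<in> M} \<subseteq> (\<lambda>p. (\<lambda>x. val p + x) ` Ov) ` (A \<times> A)"
  proof (rule subsetI)
    fix X assume "X \<in> {(\<lambda>x. t + x) ` Ov | t. t \<in> M}"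
    then obtain t where X: "X = (\<lambda>x. t + x) ` Ov" and "t \<in> M" by blast
    then obtain a b where t: "t = a*e1 + b*e2" "a \<in> Ov" "b \<in> Ov" using M by blast
    obtain c where a: "a = (\<Sum>j<n. of_int (c j) * z^j)" using t(2) OZ unfolding Zs_def by blast
    obtain d where b: "b = (\<Sum>j<n. of_int (d j) * z^j)" using t(3) OZ unfolding Zs_def by blast
    define c' where "c' = restrict (\<lambda>j. c j mod N) {..<n}"
    define d' where "d' = restrict (\<lambda>j. d j mod N) {..<n}"
    have cA: "c' \<in> A" "d' \<in> A" unfolding A_def c'_def d'_def using N(1) by auto
    have tv: "t = val (c, d)" unfolding val_def t a b
      by (simp add: sum_distrib_right sum.distrib)
    have "t - val (c', d') = (\<Sum>j<n. of_int (c j div N) * z^j * (of_int N * e1) + of_int (d j div N) * z^j * (of_int N * e2))"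
      unfolding tv val_def split sum_subtractf[symmetric]
    proof (rule sum.cong)
      fix j assume j: "j \<in> {..<n}"
      have c: "(of_int (c j) :: complex) = of_int (c j div N) * of_int N + of_int (c j mod N)"
        by (metis div_mult_mod_eq of_int_add of_int_mult)
      have d: "(of_int (d j) :: complex) = of_int (d j div N) * of_int N + of_int (d j mod N)"
        by (metis div_mult_mod_eq of_int_add of_int_mult)
      show "of_int (c j) * z ^ j * e1 + of_int (d j) * z ^ j * e2 - (of_int (c' j) * z ^ j * e1 + of_int (d' j) * z ^ j * e2) =
         of_int (c j div N) * z ^ j * (of_int N * e1) + of_int (d j div N) * z ^ j * (of_int N * e2)"
        using j unfolding c'_def d'_def by (simp add: c d algebra_simps)
    qed simp
    also have "\<dots> \<in> Ov"
    proof (rule subr_sum[OF Ov])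
      fix j
      have 1: "of_int (c j div N) * z^j \<in> Ov" by (rule subr_mult[OF Ov subr_of_int[OF Ov] subr_pow[OF Ov zO]])
      have 2: "of_int (d j div N) * z^j \<in> Ov" by (rule subr_mult[OF Ov subr_of_int[OF Ov] subr_pow[OF Ov zO]])
      show "of_int (c j div N) * z^j * (of_int N * e1) + of_int (d j div N) * z^j * (of_int N * e2) \<in> Ov"
        by (rule subr_add[OF Ov subr_mult[OF Ov 1 N(2)] subr_mult[OF Ov 2 N(3)]])
    qed
    finally have "(\<lambda>x. t + x) ` Ov = (\<lambda>x. val (c', d') + x) ` Ov" by (rule coset_eq[OF Ov])
    then show "X \<in> (\<lambda>p. (\<lambda>x. val p + x) ` Ov) ` (A \<times> A)" unfolding X using cA
      by (intro image_eqI[of _ _ "(c', d')"]) auto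
  qed
  moreover have "finite ((\<lambda>p. (\<lambda>x. val p + x) ` Ov) ` (A \<times> A))" using fA by simp
  ultimately show ?thesis by (rule finite_subset)
qed

lemma cosets_disjoint:
  assumes Ov: "subr Ov" and ne: "(\<lambda>x. s + x) ` Ov \<noteq> (\<lambda>x. s' + x) ` Ov"
  shows "(\<lambda>x. s + x) ` Ov \<inter> (\<lambda>x. s' + x) ` Ov = {}"
proof (rule ccontr)
  assume "(\<lambda>x. s + x) ` Ov \<inter> (\<lambda>x. s' + x) ` Ov \<noteq> {}"
  then obtain a b where ab: "a \<in> Ov" "b \<in> Ov" "s + a = s' + b" by blast
  then have "s - s' = b - a" by (simp add: algebra_simps)
  then have "s - s' \<in> Ov" using ab subr_diff[OF Ov] by simp
  then show False using coset_eq[OF Ov] ne by blast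
qed

lemma enum_cosets:
  assumes Ov: "subr Ov" and OM: "Ov \<subseteq> M" and Mg: "\<forall>x\<in>M. \<forall>y\<in>M. x + y \<in> M \<and> - x \<in> M"
    and fin: "finite {(\<lambda>x. t + x) ` Ov | t. t \<in> M}"
  shows "\<exists>(c::nat) (t::nat \<Rightarrow> complex).
         c \<ge> 1 \<and> t 1 = 0 \<and> (\<forall>i\<in>{1..c}. t i \<in> M)
         \<and> M = (\<Union>i\<in>{1..c}. (\<lambda>x. t i + x) ` Ov)
         \<and> (\<forall>i\<in>{1..c}. \<forall>j\<in>{1..c}. i \<noteq> j \<longrightarrow>
               ((\<lambda>x. t i + x) ` Ov) \<inter> ((\<lambda>x. t j + x) ` Ov) = {})
         \<and> (\<forall>G. G \<subseteq> M \<longrightarrow>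
               G = (\<Union>i\<in>{1..c}. G \<inter> ((\<lambda>x. t i + x) ` Ov)))"
proof -
  define C where "C = {(\<lambda>x. t + x) ` Ov | t. t \<in> M}"
  obtain xs where xs: "set xs = C - {Ov}" "distinct xs"
    using finite_distinct_list[of "C - {Ov}"] fin unfolding C_def by blast
  define c where "c = Suc (length xs)"
  define T where "T i = (if i = 1 then Ov else xs ! (i - 2))" for i
  define t where "t i = (if i = 1 then 0 else (SOME s. s \<in> M \<and> (\<lambda>x. s + x) ` Ov = T i))" for i
  have z0: "(\<lambda>x. 0 + x) ` Ov = Ov" by simp
  have tM: "t i \<in> M \<and> (\<lambda>x. t i + x) ` Ov = T i" if "i \<in> {1..c}" for i
  proof (cases "i = 1")
    case True
    have "0 \<in> M" using OM subr_0[OF Ov] by auto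
    then show ?thesis using True unfolding t_def T_def by simp
  next
    case False
    then have "i - 2 < length xs" using that unfolding c_def by auto
    then have "xs ! (i - 2) \<in> set xs" by (rule nth_mem)
    then have "xs ! (i - 2) \<in> C" using xs(1) by simp
    then obtain s where s: "xs ! (i - 2) = (\<lambda>x. s + x) ` Ov" "s \<in> M" unfolding C_def by blast
    have Ti: "T i = xs ! (i - 2)" using False unfolding T_def by simp
    have ex: "\<exists>s. s \<in> M \<and> (\<lambda>x. s + x) ` Ov = T i" using s Ti by (intro exI[of _ s]) simp
    have ti: "t i = (SOME s. s \<in> M \<and> (\<lambda>x. s + x) ` Ov = T i)" using False unfolding t_def by simp
    show ?thesis unfolding ti by (rule someI_ex[OF ex])
  qed
  have Tinj: "T i \<noteq> T j" if "i \<in> {1..c}" "j \<in> {1..c}" "i \<noteq> j" for i j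
  proof -
    have mem: "xs ! (k - 2) \<in> C - {Ov}" if "k \<in> {1..c}" "k \<noteq> 1" for k
    proof -
      have "k - 2 < length xs" using that unfolding c_def by auto
      then have "xs ! (k - 2) \<in> set xs" by (rule nth_mem)
      then show ?thesis using xs(1) by simp
    qed
    show ?thesis
    proof (cases "i = 1 \<or> j = 1")
      case True
      then show ?thesis
      proof
        assume i1: "i = 1"
        then have "j \<noteq> 1" using that by simp
        then have "T j \<noteq> Ov" using mem[OF that(2)] unfolding T_def by simp
        then show ?thesis using i1 unfolding T_def by simp
      next
        assume j1: "j = 1"
        then have "i \<noteq> 1" using that by simp
        then have "T i \<noteq> Ov" using mem[OF that(1)] unfolding T_def by simp
        then show ?thesis using j1 unfolding T_def by simp
      qed
    next
      case False
      then have "i - 2 < length xs" "j - 2 < length xs" "i - 2 \<noteq> j - 2" using that unfolding c_def by auto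
      then show ?thesis using False xs(2) unfolding T_def by (simp add: nth_eq_iff_index_eq)
    qed
  qed
  have MU: "M = (\<Union>i\<in>{1..c}. (\<lambda>x. t i + x) ` Ov)"
  proof
    show "(\<Union>i\<in>{1..c}. (\<lambda>x. t i + x) ` Ov) \<subseteq> M"
    proof (rule UN_least)
      fix i assume i: "i \<in> {1..c}"
      show "(\<lambda>x. t i + x) ` Ov \<subseteq> M"
      proof (rule image_subsetI)
        fix x assume "x \<in> Ov"
        then have "x \<in> M" using OM by blast
        moreover have "t i \<in> M" using tM[OF i] by blast
        ultimately show "t i + x \<in> M" using Mg by blast
      qed
    qed
    show "M \<subseteq> (\<Union>i\<in>{1..c}. (\<lambda>x. t i + x) ` Ov)"
    proof
      fix y assume y: "y \<in> M"
      have yc: "y \<in> (\<lambda>x. y + x) ` Ov" using subr_0[OF Ov] by (intro image_eqI[of _ _ 0]) auto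
      have Cy: "(\<lambda>x. y + x) ` Ov \<in> C" using y unfolding C_def by blast
      show "y \<in> (\<Union>i\<in>{1..c}. (\<lambda>x. t i + x) ` Ov)"
      proof (cases "(\<lambda>x. y + x) ` Ov = Ov")
        case True
        have "1 \<in> {1..c}" unfolding c_def by simp
        moreover have "y \<in> (\<lambda>x. t 1 + x) ` Ov" using yc True tM[of 1] unfolding c_def T_def by simp
        ultimately show ?thesis by blast
      next
        case False
        then have "(\<lambda>x. y + x) ` Ov \<in> set xs" using Cy xs(1) by blast
        then obtain k where k: "k < length xs" "xs ! k = (\<lambda>x. y + x) ` Ov" by (metis in_set_conv_nth)
        have i: "k + 2 \<in> {1..c}" using k unfolding c_def by auto
        have "T (k + 2) = (\<lambda>x. y + x) ` Ov" unfolding T_def using k by simp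
        then have "y \<in> (\<lambda>x. t (k + 2) + x) ` Ov" using tM[OF i] yc by simp
        then show ?thesis using i by blast
      qed
    qed
  qed
  have disj: "\<forall>i\<in>{1..c}. \<forall>j\<in>{1..c}. i \<noteq> j \<longrightarrow>
               ((\<lambda>x. t i + x) ` Ov) \<inter> ((\<lambda>x. t j + x) ` Ov) = {}"
  proof (intro ballI impI)
    fix i j assume ij: "i \<in> {1..c}" "j \<in> {1..c}" "i \<noteq> j"
    have "(\<lambda>x. t i + x) ` Ov \<noteq> (\<lambda>x. t j + x) ` Ov" using tM[OF ij(1)] tM[OF ij(2)] Tinj[OF ij] by simp
    then show "((\<lambda>x. t i + x) ` Ov) \<inter> ((\<lambda>x. t j + x) ` Ov) = {}" by (rule cosets_disjoint[OF Ov])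
  qed
  show ?thesis
  proof (intro exI conjI)
    show "1 \<le> c" unfolding c_def by simp
    show "t 1 = 0" unfolding t_def by simp
    show "\<forall>i\<in>{1..c}. t i \<in> M" using tM by blast
    show "M = (\<Union>i\<in>{1..c}. (\<lambda>x. t i + x) ` Ov)" by (rule MU)
    show "\<forall>i\<in>{1..c}. \<forall>j\<in>{1..c}. i \<noteq> j \<longrightarrow>
               ((\<lambda>x. t i + x) ` Ov) \<inter> ((\<lambda>x. t j + x) ` Ov) = {}" by (rule disj)
    show "\<forall>G. G \<subseteq> M \<longrightarrow> G = (\<Union>i\<in>{1..c}. G \<inter> ((\<lambda>x. t i + x) ` Ov))"
      using MU by blast
  qed
qed

theorem lemma5p5:
  fixes n :: nat and z o1 o2 \<alpha> \<beta> \<gamma> \<delta> :: complex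
  assumes "n \<ge> 3"
    and "prim_root n z"
    and "o1 \<in> int_adjoin z" and "o1 \<noteq> 0"
    and "o2 \<in> int_adjoin z" and "o2 \<noteq> 0"
    and "\<not> parallel o1 o2"
    and "\<alpha> \<in> int_adjoin (z + cnj z)" and "\<beta> \<in> int_adjoin (z + cnj z)"
    and "\<gamma> \<in> int_adjoin (z + cnj z)" and "\<delta> \<in> int_adjoin (z + cnj z)"
    and "o1 = \<alpha> + \<beta> * z" and "o2 = \<gamma> + \<delta> * z"
  defines "M \<equiv> lin (int_adjoin (z + cnj z))
                  {o1 / (\<alpha> * \<delta> - \<beta> * \<gamma>), o2 / (\<alpha> * \<delta> - \<beta> * \<gamma>)}"
  shows "int_adjoin z \<subseteq> M
    \<and> (\<forall>x\<in>M. \<forall>y\<in>M. x + y \<in> M \<and> - x \<in> M) \<and> 0 \<in> M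
    \<and> (\<forall>x\<in>int_adjoin z. \<forall>y\<in>int_adjoin z. x + y \<in> int_adjoin z \<and> - x \<in> int_adjoin z)
    \<and> 0 \<in> int_adjoin z
    \<and> finite {(\<lambda>x. t + x) ` int_adjoin z | t. t \<in> M}
    \<and> (\<exists>(c::nat) (t::nat \<Rightarrow> complex).
         c \<ge> 1 \<and> t 1 = 0 \<and> (\<forall>i\<in>{1..c}. t i \<in> M)
         \<and> M = (\<Union>i\<in>{1..c}. (\<lambda>x. t i + x) ` int_adjoin z)
         \<and> (\<forall>i\<in>{1..c}. \<forall>j\<in>{1..c}. i \<noteq> j \<longrightarrow>
               ((\<lambda>x. t i + x) ` int_adjoin z) \<inter> ((\<lambda>x. t j + x) ` int_adjoin z) = {})
         \<and> (\<forall>G. G \<subseteq> M \<longrightarrow>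
               G = (\<Union>i\<in>{1..c}. G \<inter> ((\<lambda>x. t i + x) ` int_adjoin z))))"
proof -
  define Ov where "Ov = int_adjoin z"
  define R where "R = int_adjoin (z + cnj z)"
  define D where "D = \<alpha> * \<delta> - \<beta> * \<gamma>"
  define e1 where "e1 = o1 / D"
  define e2 where "e2 = o2 / D"
  have Ovs: "subr Ov" unfolding Ov_def by (rule subr_int_adjoin)
  have Rs: "subr R" unfolding R_def by (rule subr_int_adjoin)
  have RO: "R \<subseteq> Ov" unfolding R_def Ov_def by (rule R_sub_O[OF assms(1,2)])
  have RR: "R \<subseteq> \<real>" unfolding R_def by (rule R_real)
  have abcd: "\<alpha> \<in> R" "\<beta> \<in> R" "\<gamma> \<in> R" "\<delta> \<in> R" using assms(8-11) unfolding R_def by auto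
  have D0: "D \<noteq> 0" unfolding D_def
    using D_nonzero[of \<alpha> \<beta> \<gamma> \<delta> o1 z o2] abcd RR assms(4,7,12,13) by blast
  have e12: "e1 \<noteq> e2"
  proof
    assume "e1 = e2"
    then have "o1 = o2" unfolding e1_def e2_def using D0 by (simp add: field_simps)
    then have "o1 = of_real 1 * o2" by simp
    then show False using assms(7) unfolding parallel_def by blast
  qed
  have Mc: "M = {a*e1 + b*e2 | a b. a \<in> R \<and> b \<in> R}"
    unfolding M_def R_def[symmetric] D_def[symmetric] e1_def[symmetric] e2_def[symmetric]
    by (rule lin2[OF subr_0[OF Rs] e12])
  have OM: "Ov \<subseteq> M"
  proof
    fix x assume "x \<in> Ov"
    then obtain a b where ab: "x = a + b * z" "a \<in> R" "b \<in> R"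
      unfolding Ov_def R_def O_decomp[OF assms(1,2)] by blast
    have id: "(a*\<delta> - b*\<gamma>) * o1 + (b*\<alpha> - a*\<beta>) * o2 = D * x"
      unfolding ab(1) assms(12,13) D_def by (simp add: algebra_simps)
    have "(a*\<delta> - b*\<gamma>) * e1 + (b*\<alpha> - a*\<beta>) * e2 = ((a*\<delta> - b*\<gamma>) * o1 + (b*\<alpha> - a*\<beta>) * o2) / D"
      unfolding e1_def e2_def by (simp add: add_divide_distrib)
    also have "\<dots> = x" unfolding id using D0 by simp
    finally have "x = (a*\<delta> - b*\<gamma>) * e1 + (b*\<alpha> - a*\<beta>) * e2" by simp
    moreover have "a*\<delta> - b*\<gamma> \<in> R" "b*\<alpha> - a*\<beta> \<in> R" using ab abcd
      by (simp_all add: subr_diff[OF Rs] subr_mult[OF Rs])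
    ultimately show "x \<in> M" unfolding Mc by blast
  qed
  have Mg: "\<forall>x\<in>M. \<forall>y\<in>M. x + y \<in> M \<and> - x \<in> M"
  proof (intro ballI conjI)
    fix x y assume "x \<in> M" "y \<in> M"
    then obtain a b c d where x: "x = a*e1 + b*e2" "a \<in> R" "b \<in> R"
      and y: "y = c*e1 + d*e2" "c \<in> R" "d \<in> R" unfolding Mc by blast
    have "x + y = (a + c)*e1 + (b + d)*e2" using x y by (simp add: algebra_simps)
    moreover have "a + c \<in> R" "b + d \<in> R" using x y by (simp_all add: subr_add[OF Rs])
    ultimately show "x + y \<in> M" unfolding Mc by blast
    have "- x = (- a)*e1 + (- b)*e2" using x by (simp add: algebra_simps)
    moreover have "- a \<in> R" "- b \<in> R" using x by (simp_all add: subr_uminus[OF Rs])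
    ultimately show "- x \<in> M" unfolding Mc by blast
  qed
  have M0: "0 \<in> M" using OM subr_0[OF Ovs] by blast
  have Og: "\<forall>x\<in>Ov. \<forall>y\<in>Ov. x + y \<in> Ov \<and> - x \<in> Ov"
    using subr_add[OF Ovs] subr_uminus[OF Ovs] by blast
  have DO: "D \<in> Ov" using abcd RO unfolding D_def
    by (intro subr_diff[OF Ovs] subr_mult[OF Ovs]) auto
  have zn: "z ^ n = 1" using assms(2) by (simp add: prim_root_def)
  have n0: "n > 0" using assms(1) by simp
  have OZ: "Ov \<subseteq> Zs n z" unfolding Ov_def by (rule O_Zs[OF zn n0])
  have Ospan: "Ov \<subseteq> Qvs.span ((\<lambda>j. z^j) ` {..<n})" using OZ Zs_span by blast
  obtain N :: int where N: "N > 0" "of_int N / D \<in> Ov"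
    using denom_exists[OF Ovs DO D0 _ Ospan] by blast
  have Ne1: "of_int N * e1 \<in> Ov"
  proof -
    have "of_int N * e1 = (of_int N / D) * o1" unfolding e1_def by simp
    moreover have "(of_int N / D) * o1 \<in> Ov" using N(2) assms(3) unfolding Ov_def
      by (rule subr_mult[OF subr_int_adjoin])
    ultimately show ?thesis by simp
  qed
  have Ne2: "of_int N * e2 \<in> Ov"
  proof -
    have "of_int N * e2 = (of_int N / D) * o2" unfolding e2_def by simp
    moreover have "(of_int N / D) * o2 \<in> Ov" using N(2) assms(5) unfolding Ov_def
      by (rule subr_mult[OF subr_int_adjoin])
    ultimately show ?thesis by simp
  qed
  have zO: "z \<in> Ov" unfolding Ov_def by (rule in_int_adjoin)
  have MO: "M \<subseteq> {a*e1 + b*e2 | a b. a \<in> Ov \<and> b \<in> Ov}" unfolding Mc using RO by blast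
  have fin: "finite {(\<lambda>x. t + x) ` Ov | t. t \<in> M}"
    by (rule cosets_finite[OF Ovs OZ zO MO N(1) Ne1 Ne2])
  have en: "\<exists>(c::nat) (t::nat \<Rightarrow> complex).
         c \<ge> 1 \<and> t 1 = 0 \<and> (\<forall>i\<in>{1..c}. t i \<in> M)
         \<and> M = (\<Union>i\<in>{1..c}. (\<lambda>x. t i + x) ` Ov)
         \<and> (\<forall>i\<in>{1..c}. \<forall>j\<in>{1..c}. i \<noteq> j \<longrightarrow>
               ((\<lambda>x. t i + x) ` Ov) \<inter> ((\<lambda>x. t j + x) ` Ov) = {})
         \<and> (\<forall>G. G \<subseteq> M \<longrightarrow>
               G = (\<Union>i\<in>{1..c}. G \<inter> ((\<lambda>x. t i + x) ` Ov)))"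
    by (rule enum_cosets[OF Ovs OM Mg fin])
  show ?thesis
    using OM Mg M0 Og subr_0[OF Ovs] fin en unfolding Ov_def by blast
qed

end
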